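(* Let $A$ be an associative algebra with identity over a field $\mathbf{k}$, let $q\in A$ be an idempotent, and let $k\in\mathbf{k}$ be a fixed scalar. Then the invariant algebra $(A,q)=\{x\in A : qxq=qx\}$ is a Lie algebra under the bracket $$[x,y]_{6,k}:=xy-yx-xyq+yxq+kxqy-kyqx,\qquad x,y\in (A,q).$$
   Context: For an associative algebra $A$ with identity and an idempotent $q\in A$, the (right) invariant algebra induced by $q$ is the set $(A,q):=\{x\in A: qxq=qx\}$; it is an associative subalgebra of $A$ containing $1$ and $q$. *)

theory Defs
  imports Main "HOL.Vector_Spaces"
begin

definition assoc_algebra :: "('k::field \<Rightarrow> 'a::ring_1 \<Rightarrow> 'a) \<Rightarrow> bool" where
  "assoc_algebra scale \<longleftrightarrow> vector_space scale \<and>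
     (\<forall>c x y. scale c x * y = scale c (x * y)) \<and>
     (\<forall>c x y. x * scale c y = scale c (x * y))"

definition invariant_algebra :: "'a::ring_1 \<Rightarrow> 'a set" where
  "invariant_algebra q = {x. q * x * q = q * x}"

definition bracket6 :: "('k::field \<Rightarrow> 'a::ring_1 \<Rightarrow> 'a) \<Rightarrow> 'k \<Rightarrow> 'a \<Rightarrow> 'a \<Rightarrow> 'a \<Rightarrow> 'a" where
  "bracket6 scale k q x y =
     x * y - y * x - x * y * q + y * x * q + scale k (x * q * y) - scale k (y * q * x)"

definition lie_algebra_on ::
  "('k::field \<Rightarrow> 'a::ab_group_add \<Rightarrow> 'a) \<Rightarrow> 'a set \<Rightarrow> ('a \<Rightarrow> 'a \<Rightarrow> 'a) \<Rightarrow> bool" where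
  "lie_algebra_on scale S br \<longleftrightarrow>
     module.subspace scale S \<and>
     (\<forall>x\<in>S. \<forall>y\<in>S. br x y \<in> S) \<and>
     (\<forall>x\<in>S. \<forall>y\<in>S. \<forall>z\<in>S. br (x + y) z = br x z + br y z) \<and>
     (\<forall>x\<in>S. \<forall>y\<in>S. \<forall>z\<in>S. br x (y + z) = br x y + br x z) \<and>
     (\<forall>c. \<forall>x\<in>S. \<forall>y\<in>S. br (scale c x) y = scale c (br x y)) \<and>
     (\<forall>c. \<forall>x\<in>S. \<forall>y\<in>S. br x (scale c y) = scale c (br x y)) \<and>
     (\<forall>x\<in>S. br x x = 0) \<and>
     (\<forall>x\<in>S. \<forall>y\<in>S. \<forall>z\<in>S. br x (br y z) + br y (br z x) + br z (br x y) = 0)"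

end

theory Submission
  imports Defs
begin

definition "br6 K q x y = x * y - y * x - x * y * q + y * x * q + K * (x * q * y) - K * (y * q * x)"

lemma jac:
  fixes q K x y z :: "'a::ring_1"
  assumes qq: "q * q = q"
   and Kx: "x * K = K * x" and Ky: "y * K = K * y" and Kz: "z * K = K * z" and Kq: "q * K = K * q"
   and x: "q * x * q = q * x" and y: "q * y * q = q * y" and z: "q * z * q = q * z"
  shows "br6 K q x (br6 K q y z) + br6 K q y (br6 K q z x) + br6 K q z (br6 K q x y) = 0"
proof -
  let ?S = "{x,y,z}"
  have S: "\<And>u. u \<in> ?S \<Longrightarrow> q * u * q = q * u" using x y z by auto
  have Q1: "q * (q * w) = q * w" for w by (metis qq mult.assoc)
  have Q2: "a \<in> ?S \<Longrightarrow> q * (a * q) = q * a" for a using S by (simp add: mult.assoc)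
  have Q3: "a \<in> ?S \<Longrightarrow> q * (a * (q * w)) = q * (a * w)" for a w using S by (metis mult.assoc)
  have Q4: "a \<in> ?S \<Longrightarrow> b \<in> ?S \<Longrightarrow> q * (a * (b * q)) = q * (a * b)"
   and Q5: "a \<in> ?S \<Longrightarrow> b \<in> ?S \<Longrightarrow> q * (a * (b * (q * w))) = q * (a * (b * w))" for a b w
  proof -
    assume a: "a \<in> ?S" and b: "b \<in> ?S"
    have "q * a * b * q = q * a * q * b * q" using S[OF a] by simp
    also have "\<dots> = q * a * q * b" using S[OF b] by (simp add: mult.assoc)
    also have "\<dots> = q * a * b" using S[OF a] by simp
    finally have e: "q * a * b * q = q * a * b" .
    then show "q * (a * (b * q)) = q * (a * b)" by (simp add: mult.assoc)
    show "q * (a * (b * (q * w))) = q * (a * (b * w))" using e by (metis mult.assoc)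
  qed
  have K2: "x * (K * w) = K * (x * w)" "y * (K * w) = K * (y * w)" "z * (K * w) = K * (z * w)" "q * (K * w) = K * (q * w)" for w
    by (metis Kx Ky Kz Kq mult.assoc)+
  show ?thesis unfolding br6_def
    by (simp add: algebra_simps Q1 Q2 Q3 Q4 Q5 K2 Kx Ky Kz Kq qq)
qed
lemma clos:
  fixes q K x y :: "'a::ring_1"
  assumes qq: "q * q = q"
   and Kx: "x * K = K * x" and Ky: "y * K = K * y" and Kq: "q * K = K * q"
   and x: "q * x * q = q * x" and y: "q * y * q = q * y"
  shows "q * br6 K q x y * q = q * br6 K q x y"
proof -
  let ?S = "{x,y}"
  have S: "\<And>u. u \<in> ?S \<Longrightarrow> q * u * q = q * u" using x y by auto
  have Q1: "q * (q * w) = q * w" for w by (metis qq mult.assoc)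
  have Q2: "a \<in> ?S \<Longrightarrow> q * (a * q) = q * a" for a using S by (simp add: mult.assoc)
  have Q3: "a \<in> ?S \<Longrightarrow> q * (a * (q * w)) = q * (a * w)" for a w using S by (metis mult.assoc)
  have Q4: "a \<in> ?S \<Longrightarrow> b \<in> ?S \<Longrightarrow> q * (a * (b * q)) = q * (a * b)" for a b
  proof -
    assume a: "a \<in> ?S" and b: "b \<in> ?S"
    have "q * a * b * q = q * a * q * b * q" using S[OF a] by simp
    also have "\<dots> = q * a * q * b" using S[OF b] by (simp add: mult.assoc)
    also have "\<dots> = q * a * b" using S[OF a] by simp
    finally show ?thesis by (simp add: mult.assoc)
  qed
  have K2: "x * (K * w) = K * (x * w)" "y * (K * w) = K * (y * w)" "q * (K * w) = K * (q * w)" for w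
    by (metis Kx Ky Kq mult.assoc)+
  show ?thesis unfolding br6_def
    by (simp add: algebra_simps Q1 Q2 Q3 Q4 K2 Kx Ky Kq qq)
qed

lemma scl:
  fixes q K C x y :: "'a::ring_1"
  assumes Kx: "x * K = K * x" and Ky: "y * K = K * y" and Kq: "q * K = K * q"
   and Cx: "x * C = C * x" and Cy: "y * C = C * y" and Cq: "q * C = C * q" and CK: "K * C = C * K"
  shows "br6 K q (C * x) y = C * br6 K q x y" "br6 K q x (C * y) = C * br6 K q x y"
proof -
  have C2: "x * (C * w) = C * (x * w)" "y * (C * w) = C * (y * w)" "q * (C * w) = C * (q * w)"
     "K * (C * w) = C * (K * w)" for w
    by (metis Cx Cy Cq CK mult.assoc)+
  show "br6 K q (C * x) y = C * br6 K q x y" "br6 K q x (C * y) = C * br6 K q x y"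
    unfolding br6_def by (simp_all add: algebra_simps C2 Cx Cy Cq CK)
qed


lemma central:
  assumes "assoc_algebra scale"
  shows "scale c x = scale c 1 * x" "x * scale c 1 = scale c 1 * x"
proof -
  have a: "\<And>c x y. scale c x * y = scale c (x * y)" "\<And>c x y. x * scale c y = scale c (x * y)"
    using assms unfolding assoc_algebra_def by auto
  show 1: "scale c x = scale c 1 * x" using a(1)[of c 1 x] by simp
  show "x * scale c 1 = scale c 1 * x" using a(2)[of x c 1] 1 by simp
qed

theorem proposition1p1:
  fixes scale :: "'k::field \<Rightarrow> 'a::ring_1 \<Rightarrow> 'a"
    and q :: 'a and k :: 'k
  assumes "assoc_algebra scale"
    and "q * q = q"
  shows "lie_algebra_on scale (invariant_algebra q) (bracket6 scale k q)"
proof -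
  define S where "S = invariant_algebra q"
  define K where "K = scale k 1"
  note C = central[OF assms(1)]
  have sc: "\<And>c x. scale c x = scale c 1 * x" by (rule C(1))
  have KC: "\<And>x. x * K = K * x" unfolding K_def by (rule C(2))
  have br: "\<And>x y. bracket6 scale k q x y = br6 K q x y"
    unfolding bracket6_def br6_def K_def using sc by metis
  have memS: "\<And>u. (u \<in> S) = (q * u * q = q * u)" unfolding S_def invariant_algebra_def by auto
  show ?thesis
    unfolding S_def[symmetric] lie_algebra_on_def br
  proof (intro conjI ballI allI)
    show "module.subspace scale S"
    proof -
      have vs: "vector_space scale" using assms(1) unfolding assoc_algebra_def by auto
      then interpret vector_space scale .
      show ?thesis unfolding subspace_def
      proof (intro conjI ballI allI)
        show "0 \<in> S" unfolding memS by simp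
      next
        fix x y assume "x \<in> S" "y \<in> S"
        then show "x + y \<in> S" unfolding memS by (simp add: algebra_simps)
      next
        fix c x assume "x \<in> S"
        show "scale c x \<in> S"
        proof -
          have h: "q * x * q = q * x" using \<open>x \<in> S\<close> memS by simp
          have "q * scale c x * q = scale c 1 * (q * x * q)" by (metis sc C(2) mult.assoc)
          also have "\<dots> = scale c 1 * (q * x)" using h by simp
          also have "\<dots> = q * scale c x" by (metis sc C(2) mult.assoc)
          finally show ?thesis unfolding memS .
        qed
      qed
    qed
  next
    fix x y assume x: "x \<in> S" and y: "y \<in> S"
    show "br6 K q x y \<in> S"
      unfolding memS by (rule clos[OF assms(2) KC KC KC]) (use x y memS in auto)
  next
    fix x y z assume "x \<in> S" "y \<in> S" "z \<in> S"
    show "br6 K q (x + y) z = br6 K q x z + br6 K q y z"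
      unfolding br6_def by (simp add: algebra_simps)
    show "br6 K q x (y + z) = br6 K q x y + br6 K q x z"
      unfolding br6_def by (simp add: algebra_simps)
  next
    fix c x y assume "x \<in> S" "y \<in> S"
    have s: "br6 K q (scale c 1 * x) y = scale c 1 * br6 K q x y" "br6 K q x (scale c 1 * y) = scale c 1 * br6 K q x y"
      by (rule scl[OF KC KC KC C(2) C(2) C(2) KC[symmetric]])+
    show "br6 K q (scale c x) y = scale c (br6 K q x y)"
      using s by (simp add: sc[of c x] sc[of c "br6 K q x y"])
    show "br6 K q x (scale c y) = scale c (br6 K q x y)"
      using s by (simp add: sc[of c y] sc[of c "br6 K q x y"])
  next
    fix x assume "x \<in> S"
    show "br6 K q x x = 0" unfolding br6_def by simp
  next
    fix x y z assume x: "x \<in> S" and y: "y \<in> S" and z: "z \<in> S"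
    show "br6 K q x (br6 K q y z) + br6 K q y (br6 K q z x) + br6 K q z (br6 K q x y) = 0"
      by (rule jac[OF assms(2) KC KC KC KC]) (use x y z memS in auto)
  qed
qed

end
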